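(* Let $v_1,\dots,v_n\in\mathbb{R}^d$, let $Z\in\mathbb{R}^{d\times d}$ be symmetric with $Z\succeq\frac14I$, let $\alpha=8\sqrt d$, and let $A=(\alpha Z-\ell I)^{-2}$ where $\ell\in\mathbb{R}$ is the unique scalar such that $\alpha Z-\ell I\succ0$ and $\operatorname{tr}(A)=1$. Then for every $1\le i\le n$, \[ \langle v_iv_i^\top,Z^{-1}\rangle\le\alpha\langle v_iv_i^\top,A^{1/2}\rangle\le\alpha\lambda_{\min}(Z)\langle v_iv_i^\top,Z^{-1}\rangle. \]
   Context: $\langle M,N\rangle=\operatorname{tr}(MN)$ for symmetric matrices. *)

theory Defs
  imports "HOL-Analysis.Analysis"
begin

text \<open>Real d x d matrices are modelled as real^'d^'d; d = CARD('d).\<close>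

definition symmetric_mat :: "real^'d^'d \<Rightarrow> bool" where
  "symmetric_mat M \<longleftrightarrow> transpose M = M"

definition psd :: "real^'d^'d \<Rightarrow> bool" where
  "psd M \<longleftrightarrow> symmetric_mat M \<and> (\<forall>x. x \<bullet> (M *v x) \<ge> 0)"

definition pd :: "real^'d^'d \<Rightarrow> bool" where
  "pd M \<longleftrightarrow> symmetric_mat M \<and> (\<forall>x. x \<noteq> 0 \<longrightarrow> x \<bullet> (M *v x) > 0)"

definition loewner_ge :: "real^'d^'d \<Rightarrow> real^'d^'d \<Rightarrow> bool" where
  "loewner_ge M N \<longleftrightarrow> psd (M - N)"

definition frob :: "real^'d^'d \<Rightarrow> real^'d^'d \<Rightarrow> real" where
  "frob M N = trace (M ** N)"

definition outer :: "real^'d \<Rightarrow> real^'d \<Rightarrow> real^'d^'d" where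
  "outer u w = (\<chi> i j. u $ i * w $ j)"

definition psd_sqrt :: "real^'d^'d \<Rightarrow> real^'d^'d" where
  "psd_sqrt A = (THE B. psd B \<and> B ** B = A)"

definition eigenvalues_mat :: "real^'d^'d \<Rightarrow> real set" where
  "eigenvalues_mat M = {c. \<exists>x. x \<noteq> 0 \<and> M *v x = c *\<^sub>R x}"

definition lambda_min :: "real^'d^'d \<Rightarrow> real" where
  "lambda_min M = Min (eigenvalues_mat M)"

end

theory Submission
  imports Defs
begin

lemma sym_inner:
  fixes M :: "real^'d^'d"
  assumes "symmetric_mat M"
  shows "(M *v x) \<bullet> y = x \<bullet> (M *v y)"
proof -
  have "M *v x = x v* M" using assms unfolding symmetric_mat_def
    by (metis vector_transpose_matrix)
  thus ?thesis by (simp add: dot_lmul_matrix)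
qed

lemma inv_props:
  fixes M :: "real^'d^'d"
  assumes "\<And>x. M *v x = 0 \<Longrightarrow> x = 0"
  shows "M ** matrix_inv M = mat 1 \<and> matrix_inv M ** M = mat 1"
proof -
  have "\<exists>B. B ** M = mat 1" using assms matrix_left_invertible_ker by blast
  hence "invertible M" using invertible_left_inverse by blast
  then obtain A' where "M ** A' = mat 1 \<and> A' ** M = mat 1" unfolding invertible_def by blast
  thus ?thesis unfolding matrix_inv_def by (rule someI)
qed

lemma inv_vec:
  fixes M :: "real^'d^'d"
  assumes "\<And>x. M *v x = 0 \<Longrightarrow> x = 0"
  shows "M *v (matrix_inv M *v x) = x" "matrix_inv M *v (M *v x) = x"
  using inv_props[OF assms] by (simp_all add: matrix_vector_mul_assoc)

lemma psd_zero:
  fixes P :: "real^'d^'d"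
  assumes "symmetric_mat P" "\<And>x. x \<bullet> (P *v x) \<ge> 0" "x \<bullet> (P *v x) = 0"
  shows "P *v x = 0"
proof (rule ccontr)
  assume ne: "P *v x \<noteq> 0"
  define y where "y = P *v x"
  define a where "a = y \<bullet> y"
  define b where "b = y \<bullet> (P *v y)"
  have a: "a > 0" using ne unfolding a_def y_def by simp
  have b: "b \<ge> 0" using assms(2) unfolding b_def by simp
  define t where "t = a / (b + 1)"
  have t: "t > 0" using a b unfolding t_def by simp
  have "0 \<le> (x - t *\<^sub>R y) \<bullet> (P *v (x - t *\<^sub>R y))" by (rule assms(2))
  also have "\<dots> = x \<bullet> (P *v x) - t * (x \<bullet> (P *v y)) - t * (y \<bullet> (P *v x)) + t * t * b"
    by (simp add: algebra_simps inner_diff_left inner_diff_right b_def)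
  also have "x \<bullet> (P *v y) = a" using sym_inner[OF assms(1), of x y] unfolding a_def y_def by simp
  also have "y \<bullet> (P *v x) = a" unfolding a_def y_def by simp
  finally have "0 \<le> t * (t * b - 2 * a)" using assms(3) by (simp add: algebra_simps)
  hence "0 \<le> t * b - 2 * a" using t by (simp add: zero_le_mult_iff)
  moreover have "t * b < a" unfolding t_def using a b by (simp add: field_simps)
  ultimately show False using a by linarith
qed

lemma sym_diff: "symmetric_mat A \<Longrightarrow> symmetric_mat B \<Longrightarrow> symmetric_mat (A - B)"
  unfolding symmetric_mat_def by (simp add: transpose_def vec_eq_iff)
lemma sym_add: "symmetric_mat A \<Longrightarrow> symmetric_mat B \<Longrightarrow> symmetric_mat (A + B)"
  unfolding symmetric_mat_def by (simp add: transpose_def vec_eq_iff)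
lemma sym_scale: "symmetric_mat A \<Longrightarrow> symmetric_mat (c *\<^sub>R A)"
  unfolding symmetric_mat_def by (simp add: transpose_scalar)
lemma sym_mat1: "symmetric_mat (mat 1)"
  unfolding symmetric_mat_def by simp
lemma sym_uminus: "symmetric_mat A \<Longrightarrow> symmetric_mat (- A)"
  unfolding symmetric_mat_def by (simp add: transpose_def vec_eq_iff)

lemma min_eig:
  fixes D :: "real^'d^'d"
  assumes "symmetric_mat D"
  shows "\<exists>u. norm u = 1 \<and> D *v u = (u \<bullet> (D *v u)) *\<^sub>R u \<and> (\<forall>x. (u \<bullet> (D *v u)) * (x \<bullet> x) \<le> x \<bullet> (D *v x))"
proof -
  have cont: "continuous_on (sphere 0 1) (\<lambda>x::real^'d. x \<bullet> (D *v x))"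
    by (intro continuous_intros linear_continuous_on bounded_linear_intros) auto
  have ne: "sphere (0::real^'d) 1 \<noteq> {}" by simp
  obtain u where u: "u \<in> sphere 0 1" and umin: "\<And>y. y \<in> sphere 0 1 \<Longrightarrow> u \<bullet> (D *v u) \<le> y \<bullet> (D *v y)"
    using continuous_attains_inf[OF compact_sphere ne cont] by blast
  define \<mu> where "\<mu> = u \<bullet> (D *v u)"
  have nu: "norm u = 1" using u by simp
  have all: "\<mu> * (x \<bullet> x) \<le> x \<bullet> (D *v x)" for x
  proof (cases "x = 0")
    case True thus ?thesis by simp
  next
    case False
    define y where "y = (1 / norm x) *\<^sub>R x"
    have "y \<in> sphere 0 1" using False unfolding y_def by simp
    hence "\<mu> \<le> y \<bullet> (D *v y)" using umin unfolding \<mu>_def by blast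
    also have "y \<bullet> (D *v y) = (x \<bullet> (D *v x)) / (x \<bullet> x)"
      unfolding y_def by (simp add: matrix_vector_mult_scaleR power2_norm_eq_inner[symmetric] power2_eq_square divide_simps)
    finally show ?thesis using False by (simp add: divide_simps mult.commute)
  qed
  define P where "P = D - \<mu> *\<^sub>R mat 1"
  have Pv: "P *v x = D *v x - \<mu> *\<^sub>R x" for x
    unfolding P_def by (simp add: matrix_vector_mult_diff_rdistrib scaleR_matrix_vector_assoc[symmetric])
  have Ps: "symmetric_mat P" unfolding P_def by (intro sym_diff sym_scale sym_mat1 assms)
  have Pn: "x \<bullet> (P *v x) \<ge> 0" for x using all[of x] by (simp add: Pv inner_diff_right)
  have Pu: "u \<bullet> (P *v u) = 0" using nu by (simp add: Pv inner_diff_right \<mu>_def norm_eq_1)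
  have "P *v u = 0" by (rule psd_zero[OF Ps Pn Pu])
  hence "D *v u = \<mu> *\<^sub>R u" by (simp add: Pv)
  thus ?thesis using nu all unfolding \<mu>_def by blast
qed

lemma frob_outer:
  fixes P :: "real^'d^'d"
  shows "frob (outer w w) P = w \<bullet> (P *v w)"
  unfolding frob_def outer_def trace_def matrix_matrix_mult_def inner_vec_def matrix_vector_mult_def
  apply (simp add: sum_distrib_left)
  apply (subst sum.swap)
  apply (simp add: mult_ac)
  done

lemma eig_finite:
  fixes Z :: "real^'d^'d"
  assumes "symmetric_mat Z"
  shows "finite (eigenvalues_mat Z)"
proof -
  let ?S = "eigenvalues_mat Z"
  define f where "f c = (SOME x. x \<noteq> 0 \<and> Z *v x = c *\<^sub>R x)" for c
  have f: "f c \<noteq> 0 \<and> Z *v f c = c *\<^sub>R f c" if "c \<in> ?S" for c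
  proof -
    have "\<exists>x. x \<noteq> 0 \<and> Z *v x = c *\<^sub>R x" using that unfolding eigenvalues_mat_def by blast
    from someI_ex[OF this] show ?thesis unfolding f_def .
  qed
  have inj: "inj_on f ?S"
  proof (rule inj_onI)
    fix c c' assume c: "c \<in> ?S" "c' \<in> ?S" "f c = f c'"
    hence "c *\<^sub>R f c = c' *\<^sub>R f c" using f by metis
    thus "c = c'" using f[OF c(1)] by (simp add: scaleR_cancel_right)
  qed
  have "pairwise orthogonal (f ` ?S)"
  proof (clarsimp simp: pairwise_def)
    fix c c' assume c: "c \<in> ?S" "c' \<in> ?S" "f c \<noteq> f c'"
    hence ne: "c \<noteq> c'" by auto
    have "(Z *v f c) \<bullet> f c' = f c \<bullet> (Z *v f c')" by (rule sym_inner[OF assms])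
    hence "c * (f c \<bullet> f c') = c' * (f c \<bullet> f c')" using f[OF c(1)] f[OF c(2)] by simp
    hence "f c \<bullet> f c' = 0" using ne by simp
    thus "orthogonal (f c) (f c')" unfolding orthogonal_def .
  qed
  hence "finite (f ` ?S)" by (rule pairwise_orthogonal_imp_finite)
  thus ?thesis using inj finite_imageD by blast
qed

lemma lambda_min_eq:
  fixes Z :: "real^'d^'d"
  assumes "symmetric_mat Z" "u \<noteq> 0" "Z *v u = z0 *\<^sub>R u" "\<And>x. z0 * (x \<bullet> x) \<le> x \<bullet> (Z *v x)"
  shows "lambda_min Z = z0"
  unfolding lambda_min_def
proof (rule Min_eqI[OF eig_finite[OF assms(1)]])
  show "z0 \<in> eigenvalues_mat Z" using assms(2,3) unfolding eigenvalues_mat_def by blast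
  fix c assume "c \<in> eigenvalues_mat Z"
  then obtain x where x: "x \<noteq> 0" "Z *v x = c *\<^sub>R x" unfolding eigenvalues_mat_def by blast
  have "z0 * (x \<bullet> x) \<le> c * (x \<bullet> x)" using assms(4)[of x] x by simp
  moreover have "x \<bullet> x > 0" using x by simp
  ultimately show "z0 \<le> c" by simp
qed

lemma sym_zero:
  fixes D :: "real^'d^'d"
  assumes "symmetric_mat D" "\<And>u. u \<noteq> 0 \<Longrightarrow> D *v u = (u \<bullet> (D *v u) / (u \<bullet> u)) *\<^sub>R u \<Longrightarrow> u \<bullet> (D *v u) = 0"
  shows "D = 0"
proof -
  obtain u where u: "norm u = 1" "D *v u = (u \<bullet> (D *v u)) *\<^sub>R u" "\<forall>x. (u \<bullet> (D *v u)) * (x \<bullet> x) \<le> x \<bullet> (D *v x)"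
    using min_eig[OF assms(1)] by blast
  have "u \<noteq> 0" "u \<bullet> u = 1" using u(1) by (auto simp: norm_eq_1)
  hence u0: "u \<bullet> (D *v u) = 0" using assms(2)[of u] u(2) by simp
  obtain w where w: "norm w = 1" "(-D) *v w = (w \<bullet> ((-D) *v w)) *\<^sub>R w" "\<forall>x. (w \<bullet> ((-D) *v w)) * (x \<bullet> x) \<le> x \<bullet> ((-D) *v x)"
    using min_eig[OF sym_uminus[OF assms(1)]] by blast
  have neg: "(-D) *v x = - (D *v x)" for x by (simp add: matrix_vector_mult_def vec_eq_iff sum_negf)
  have "w \<noteq> 0" "w \<bullet> w = 1" using w(1) by (auto simp: norm_eq_1)
  moreover have "D *v w = (w \<bullet> (D *v w)) *\<^sub>R w" using w(2) by (simp add: neg)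
  ultimately have w0: "w \<bullet> (D *v w) = 0" using assms(2)[of w] by simp
  have ge: "x \<bullet> (D *v x) \<ge> 0" for x using u(3) u0 by simp
  have le: "x \<bullet> (D *v x) \<le> 0" for x using w(3) w0 by (simp add: neg)
  have "D *v x = 0 *v x" for x using psd_zero[OF assms(1) ge] ge[of x] le[of x] by simp
  thus ?thesis using matrix_eq by blast
qed

lemma psd_sqrt_eq:
  fixes N :: "real^'d^'d"
  assumes "psd N" "\<And>x. N *v x = 0 \<Longrightarrow> x = 0"
  shows "psd_sqrt (N ** N) = N"
  unfolding psd_sqrt_def
proof (rule the_equality)
  show "psd N \<and> N ** N = N ** N" using assms by simp
  fix B assume B: "psd B \<and> B ** B = N ** N"
  have Ns: "symmetric_mat N" and Np: "\<And>x. x \<bullet> (N *v x) \<ge> 0" using assms(1) unfolding psd_def by auto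
  have Bs: "symmetric_mat B" and Bp: "\<And>x. x \<bullet> (B *v x) \<ge> 0" using B unfolding psd_def by auto
  have BB: "B *v (B *v x) = N *v (N *v x)" for x using B by (simp add: matrix_vector_mul_assoc)
  define D where "D = B - N"
  have Ds: "symmetric_mat D" unfolding D_def by (rule sym_diff[OF Bs Ns])
  have "D = 0"
  proof (rule sym_zero[OF Ds])
    fix u assume u: "u \<noteq> 0" "D *v u = (u \<bullet> (D *v u) / (u \<bullet> u)) *\<^sub>R u"
    define \<mu> where "\<mu> = u \<bullet> (D *v u) / (u \<bullet> u)"
    have Du: "B *v u - N *v u = \<mu> *\<^sub>R u" using u(2) unfolding D_def \<mu>_def by (simp add: matrix_vector_mult_diff_rdistrib)
    have "0 = u \<bullet> (B *v (B *v u) - N *v (N *v u))" by (simp add: BB)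
    also have "2 * (u \<bullet> (B *v (B *v u) - N *v (N *v u))) =
       u \<bullet> ((B *v (B *v u - N *v u)) + N *v (B *v u - N *v u)) + (B *v u - N *v u) \<bullet> (B *v u + N *v u)"
      by (simp add: algebra_simps inner_diff_left inner_diff_right inner_add_left inner_add_right sym_inner[OF Bs] sym_inner[OF Ns])
    ultimately have "0 = u \<bullet> ((B *v (B *v u - N *v u)) + N *v (B *v u - N *v u)) + (B *v u - N *v u) \<bullet> (B *v u + N *v u)"
      by simp
    also have "\<dots> = 2 * \<mu> * (u \<bullet> (B *v u) + u \<bullet> (N *v u))"
      unfolding Du by (simp add: algebra_simps inner_add_left inner_add_right matrix_vector_mult_scaleR)
    finally have z: "\<mu> * (u \<bullet> (B *v u) + u \<bullet> (N *v u)) = 0" by simp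
    show "u \<bullet> (D *v u) = 0"
    proof (rule ccontr)
      assume "u \<bullet> (D *v u) \<noteq> 0"
      hence "\<mu> \<noteq> 0" using u(1) unfolding \<mu>_def by simp
      hence "u \<bullet> (B *v u) + u \<bullet> (N *v u) = 0" using z by simp
      hence "u \<bullet> (N *v u) = 0" using Bp[of u] Np[of u] by linarith
      hence "N *v u = 0" by (rule psd_zero[OF Ns Np])
      thus False using assms(2) u(1) by blast
    qed
  qed
  thus "B = N" unfolding D_def by simp
qed

theorem lemma4p13:
  fixes v :: "nat \<Rightarrow> real^'d" and n :: nat and Z :: "real^'d^'d"
    and \<alpha> l :: real and A :: "real^'d^'d" and i :: nat
  assumes Zsym: "symmetric_mat Z"
    and Zge: "loewner_ge Z ((1/4) *\<^sub>R mat 1)"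
    and alpha: "\<alpha> = 8 * sqrt (real CARD('d))"
    and ell_pd: "pd (\<alpha> *\<^sub>R Z - l *\<^sub>R mat 1)"
    and A_def: "A = matrix_inv (\<alpha> *\<^sub>R Z - l *\<^sub>R mat 1) ** matrix_inv (\<alpha> *\<^sub>R Z - l *\<^sub>R mat 1)"
    and trA: "trace A = 1"
    and i: "1 \<le> i" "i \<le> n"
  shows "frob (outer (v i) (v i)) (matrix_inv Z) \<le> \<alpha> * frob (outer (v i) (v i)) (psd_sqrt A)
       \<and> \<alpha> * frob (outer (v i) (v i)) (psd_sqrt A) \<le> \<alpha> * lambda_min Z * frob (outer (v i) (v i)) (matrix_inv Z)"
proof -
  have Zq: "(1/4) * (x \<bullet> x) \<le> x \<bullet> (Z *v x)" for x
  proof -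
    have "0 \<le> x \<bullet> ((Z - (1/4) *\<^sub>R mat 1) *v x)" using Zge unfolding loewner_ge_def psd_def by blast
    thus ?thesis by (simp add: matrix_vector_mult_diff_rdistrib scaleR_matrix_vector_assoc[symmetric] inner_diff_right)
  qed
  obtain u where u: "norm u = 1" "Z *v u = (u \<bullet> (Z *v u)) *\<^sub>R u" "\<forall>x. (u \<bullet> (Z *v u)) * (x \<bullet> x) \<le> x \<bullet> (Z *v x)"
    using min_eig[OF Zsym] by blast
  define z0 where "z0 = u \<bullet> (Z *v u)"
  have uu: "u \<bullet> u = 1" "u \<noteq> 0" using u(1) by (auto simp: norm_eq_1)
  have Zu: "Z *v u = z0 *\<^sub>R u" using u(2) unfolding z0_def .
  have Zall: "z0 * (x \<bullet> x) \<le> x \<bullet> (Z *v x)" for x using u(3) unfolding z0_def by blast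
  have z0: "z0 \<ge> 1/4" using Zq[of u] uu unfolding z0_def by simp
  have lmin: "lambda_min Z = z0" by (rule lambda_min_eq[OF Zsym uu(2) Zu Zall])
  have Zker: "x = 0" if "Z *v x = 0" for x
  proof -
    have "x \<bullet> x \<le> 0" using Zq[of x] that by simp
    thus ?thesis by (metis inner_eq_zero_iff inner_ge_zero order_antisym)
  qed
  define M where "M = \<alpha> *\<^sub>R Z - l *\<^sub>R mat 1"
  have Mv: "M *v x = \<alpha> *\<^sub>R (Z *v x) - l *\<^sub>R x" for x
    unfolding M_def by (simp add: matrix_vector_mult_diff_rdistrib scaleR_matrix_vector_assoc[symmetric])
  have Ms: "symmetric_mat M" unfolding M_def by (intro sym_diff sym_scale sym_mat1 Zsym)
  have Mpd: "x \<noteq> 0 \<Longrightarrow> x \<bullet> (M *v x) > 0" for x using ell_pd unfolding M_def pd_def by blast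
  have Mker: "x = 0" if "M *v x = 0" for x using Mpd[of x] that by force
  define m0 where "m0 = \<alpha> * z0 - l"
  have Mu: "M *v u = m0 *\<^sub>R u" by (simp add: Mv Zu m0_def algebra_simps)
  have m0pos: "m0 > 0" using Mpd[OF uu(2)] uu by (simp add: Mu)
  have apos: "\<alpha> > 0" unfolding alpha by simp
  have Mq: "m0 * (x \<bullet> x) \<le> x \<bullet> (M *v x)" for x
    using mult_left_mono[OF Zall[of x], of \<alpha>] apos by (simp add: Mv m0_def algebra_simps)
  define N where "N = matrix_inv M"
  have MN: "M ** N = mat 1" "N ** M = mat 1" using inv_props[OF Mker] unfolding N_def by auto
  have MNv: "M *v (N *v x) = x" "N *v (M *v x) = x" for x using inv_vec[OF Mker] unfolding N_def by auto
  have Ns: "symmetric_mat N"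
  proof -
    have "transpose N ** M = mat 1" using MN(1) Ms unfolding symmetric_mat_def
      by (metis matrix_transpose_mul transpose_mat)
    hence "transpose N = transpose N ** (M ** N)" using MN by (simp add: matrix_mul_rid)
    also have "\<dots> = N" using \<open>transpose N ** M = mat 1\<close> by (simp add: matrix_mul_assoc matrix_mul_lid)
    finally show ?thesis unfolding symmetric_mat_def .
  qed
  have Npsd: "psd N" unfolding psd_def
  proof (intro conjI allI Ns)
    fix x
    have "x \<bullet> (N *v x) = (M *v (N *v x)) \<bullet> (N *v x)" by (simp add: MNv)
    also have "\<dots> = (N *v x) \<bullet> (M *v (N *v x))" by (simp add: inner_commute)
    also have "\<dots> \<ge> m0 * ((N *v x) \<bullet> (N *v x))" by (rule Mq)
    finally show "x \<bullet> (N *v x) \<ge> 0" using m0pos by (meson order_trans mult_nonneg_nonneg less_imp_le inner_ge_zero)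
  qed
  have Nker: "x = 0" if "N *v x = 0" for x using MNv(1)[of x] that by simp
  have sqA: "psd_sqrt A = N" unfolding A_def M_def[symmetric] N_def[symmetric] by (rule psd_sqrt_eq[OF Npsd Nker])
  have Nsym: "N$k$j = N$j$k" for j k using Ns unfolding symmetric_mat_def by (metis transpose_def vec_lambda_beta)
  have trN: "trace A = (\<Sum>j\<in>UNIV. N$j \<bullet> N$j)"
  proof -
    have "N$k$j = N$j$k" for j k using Ns unfolding symmetric_mat_def by (metis transpose_def vec_lambda_beta)
    thus ?thesis unfolding A_def M_def[symmetric] N_def[symmetric] trace_def matrix_matrix_mult_def inner_vec_def
      by simp
  qed
  have Nu: "N *v u = (1/m0) *\<^sub>R u"
  proof -
    have "u = N *v (m0 *\<^sub>R u)" using MNv(2)[of u] Mu by simp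
    hence "u = m0 *\<^sub>R (N *v u)" by (simp add: matrix_vector_mult_scaleR)
    hence "(1/m0) *\<^sub>R u = (1/m0) *\<^sub>R (m0 *\<^sub>R (N *v u))" by (rule arg_cong)
    hence "(1/m0) *\<^sub>R u = (N *v u)" using m0pos by simp
    thus ?thesis by simp
  qed
  have m0ge1: "m0 \<ge> 1"
  proof -
    have "(N *v u) \<bullet> (N *v u) = (\<Sum>j\<in>UNIV. (N$j \<bullet> u)^2)"
      unfolding inner_vec_def[of "N *v u"] by (simp add: matrix_vector_mul_component power2_eq_square)
    also have "\<dots> \<le> (\<Sum>j\<in>UNIV. (N$j \<bullet> N$j) * (u \<bullet> u))"
    proof (rule sum_mono)
      fix j
      have "\<bar>N$j \<bullet> u\<bar> \<le> norm (N$j) * norm u" by (rule Cauchy_Schwarz_ineq2)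
      hence "\<bar>N$j \<bullet> u\<bar>^2 \<le> (norm (N$j) * norm u)^2" by (rule power_mono) simp
      thus "(N$j \<bullet> u)^2 \<le> (N$j \<bullet> N$j) * (u \<bullet> u)"
        by (simp add: power_mult_distrib power2_norm_eq_inner)
    qed
    also have "\<dots> = 1" using trN trA uu by simp
    finally have "1/m0^2 \<le> 1" using Nu uu by (simp add: power2_eq_square)
    hence "1 \<le> m0^2" using m0pos by (simp add: field_simps)
    thus ?thesis using m0pos power2_le_imp_le[of 1 m0] by simp
  qed
  have m0le: "m0 \<le> sqrt (real CARD('d))"
  proof -
    have rowb: "m0^2 * (N$j \<bullet> N$j) \<le> 1" for j
    proof -
      have col: "N *v axis j 1 = N$j"
        unfolding matrix_vector_mult_basis column_def by (simp add: vec_eq_iff Nsym[of j])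
      define y where "y = N$j"
      have My: "M *v y = axis j 1" using MNv(1)[of "axis j 1"] col unfolding y_def by simp
      have "m0 * (y \<bullet> y) \<le> y \<bullet> (M *v y)" by (rule Mq)
      also have "\<dots> \<le> norm y * norm (M *v y)" by (rule Cauchy_Schwarz_ineq2[THEN order_trans[OF abs_ge_self]])
      also have "\<dots> = norm y" using My by simp
      finally have h: "m0 * (y \<bullet> y) \<le> norm y" .
      have "(m0 * (y \<bullet> y))^2 \<le> (norm y)^2" using h m0pos by (intro power_mono) auto
      hence "(m0 * (y \<bullet> y))^2 \<le> y \<bullet> y" by (simp only: power2_norm_eq_inner)
      hence "m0^2 * (y \<bullet> y) * (y \<bullet> y) \<le> y \<bullet> y" by (simp add: power_mult_distrib power2_eq_square mult_ac)
      moreover have "y \<bullet> y \<ge> 0" by simp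
      ultimately have "m0^2 * (y \<bullet> y) \<le> 1"
      proof (cases "y \<bullet> y = 0")
        case False
        hence pp: "y \<bullet> y > 0" using \<open>y \<bullet> y \<ge> 0\<close> by simp
        have hh: "(m0^2 * (y \<bullet> y)) * (y \<bullet> y) \<le> 1 * (y \<bullet> y)" using \<open>m0^2 * (y \<bullet> y) * (y \<bullet> y) \<le> y \<bullet> y\<close> by simp
        show ?thesis by (rule mult_right_le_imp_le[OF hh pp])
      qed simp
      thus ?thesis unfolding y_def .
    qed
    have "m0^2 = m0^2 * trace A" using trA by simp
    also have "\<dots> = (\<Sum>j\<in>UNIV. m0^2 * (N$j \<bullet> N$j))" using trN by (simp add: sum_distrib_left)
    also have "\<dots> \<le> (\<Sum>j\<in>(UNIV::'d set). 1)" by (rule sum_mono[OF rowb])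
    also have "\<dots> = real CARD('d)" by simp
    finally have "m0^2 \<le> real CARD('d)" .
    thus ?thesis using m0pos real_le_rsqrt by blast
  qed
  have lpos: "l \<ge> 0"
  proof -
    have "\<alpha> * z0 \<ge> \<alpha> * (1/4)" using z0 apos by (intro mult_left_mono) auto
    hence "\<alpha> * z0 \<ge> 2 * sqrt (real CARD('d))" unfolding alpha by simp
    moreover have "sqrt (real CARD('d)) \<ge> 0" by simp
    ultimately show ?thesis using m0le unfolding m0_def by linarith
  qed
  define w where "w = v i"
  define Zi where "Zi = matrix_inv Z"
  have ZZi: "Z *v (Zi *v x) = x" for x using inv_vec[OF Zker] unfolding Zi_def by auto
  define y where "y = N *v (Zi *v w)"
  have My: "M *v y = Zi *v w" unfolding y_def by (simp add: MNv)
  have comm: "M *v (Z *v x) = Z *v (M *v x)" for x by (simp add: Mv matrix_vector_mult_diff_distrib matrix_vector_mult_scaleR)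
  have wy: "w = Z *v (M *v y)" using My ZZi by simp
  have Q1: "w \<bullet> (Zi *v w) = (Z *v (M *v y)) \<bullet> (M *v y)" using My wy by simp
  have Nw: "N *v w = Z *v y" using wy comm MNv(2) by metis
  have Q2: "w \<bullet> (N *v w) = (M *v (Z *v y)) \<bullet> (Z *v y)" using Nw wy comm by simp
  define y1 where "y1 = Z *v y - z0 *\<^sub>R y"
  define y2 where "y2 = Z *v y1 - z0 *\<^sub>R y1"
  have Zy: "Z *v y = y1 + z0 *\<^sub>R y" unfolding y1_def by simp
  have Zy1: "Z *v y1 = y2 + z0 *\<^sub>R y1" unfolding y2_def by simp
  define g0 where "g0 = y \<bullet> y"
  define g1 where "g1 = y \<bullet> y1"
  define g2 where "g2 = y1 \<bullet> y1"
  define g3 where "g3 = y1 \<bullet> y2"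
  have Sform: "x \<bullet> (Z *v x - z0 *\<^sub>R x) \<ge> 0" for x using Zall[of x] by (simp add: inner_diff_right)
  have g0: "g0 \<ge> 0" unfolding g0_def by simp
  have g1: "g1 \<ge> 0" unfolding g1_def y1_def by (rule Sform)
  have g2: "g2 \<ge> 0" unfolding g2_def by simp
  have g3: "g3 \<ge> 0" unfolding g3_def y2_def by (rule Sform)
  have y21: "y2 \<bullet> y1 = g3" unfolding g3_def by (simp add: inner_commute)
  have y10: "y1 \<bullet> y = g1" unfolding g1_def by (simp add: inner_commute)
  have y20: "y2 \<bullet> y = g2"
  proof -
    have "y2 \<bullet> y = (Z *v y1) \<bullet> y - z0 * (y1 \<bullet> y)" unfolding y2_def by (simp add: inner_diff_left)
    also have "(Z *v y1) \<bullet> y = y1 \<bullet> (Z *v y)" by (rule sym_inner[OF Zsym])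
    finally show ?thesis unfolding g2_def y1_def by (simp add: inner_diff_right inner_diff_left inner_commute algebra_simps)
  qed
  have y02: "y \<bullet> y2 = g2" using y20 by (simp add: inner_commute)
  have MyE: "M *v y = \<alpha> *\<^sub>R y1 + m0 *\<^sub>R y" by (simp add: Mv Zy m0_def algebra_simps)
  have ZMyE: "Z *v (M *v y) = \<alpha> *\<^sub>R y2 + (\<alpha> * z0 + m0) *\<^sub>R y1 + (m0 * z0) *\<^sub>R y"
    unfolding MyE by (simp add: matrix_vector_right_distrib matrix_vector_mult_scaleR Zy Zy1 algebra_simps)
  have MZyE: "M *v (Z *v y) = \<alpha> *\<^sub>R y2 + (\<alpha> * z0 + m0) *\<^sub>R y1 + (m0 * z0) *\<^sub>R y"
    using ZMyE comm by simp
  have q1: "w \<bullet> (Zi *v w) = \<alpha>^2 * g3 + (\<alpha>^2 * z0 + 2 * \<alpha> * m0) * g2 + (2 * \<alpha> * m0 * z0 + m0^2) * g1 + m0^2 * z0 * g0"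
    unfolding Q1 ZMyE unfolding MyE
    by (simp add: inner_add_left inner_add_right y21 y10 y20 y02 g0_def[symmetric] g1_def[symmetric] g2_def[symmetric] algebra_simps power2_eq_square)
  have q2: "w \<bullet> (N *v w) = \<alpha> * g3 + (2 * \<alpha> * z0 + m0) * g2 + (\<alpha> * z0^2 + 2 * m0 * z0) * g1 + m0 * z0^2 * g0"
    unfolding Q2 MZyE unfolding Zy
    by (simp add: inner_add_left inner_add_right y21 y10 y20 y02 g0_def[symmetric] g1_def[symmetric] g2_def[symmetric] algebra_simps power2_eq_square)
  have lrel: "l = \<alpha> * z0 - m0" unfolding m0_def by simp
  have ineq1: "w \<bullet> (Zi *v w) \<le> \<alpha> * (w \<bullet> (N *v w))"
  proof -
    have "\<alpha> * (w \<bullet> (N *v w)) - w \<bullet> (Zi *v w) = l * (\<alpha> * g2 + (m0 + \<alpha> * z0) * g1 + z0 * m0 * g0)"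
      unfolding q1 q2 lrel by (simp add: algebra_simps power2_eq_square)
    moreover have "l * (\<alpha> * g2 + (m0 + \<alpha> * z0) * g1 + z0 * m0 * g0) \<ge> 0"
      using lpos apos z0 m0pos g0 g1 g2 by (intro mult_nonneg_nonneg add_nonneg_nonneg) auto
    ultimately show ?thesis by linarith
  qed
  have ineq2: "\<alpha> * (w \<bullet> (N *v w)) \<le> \<alpha> * z0 * (w \<bullet> (Zi *v w))"
  proof -
    define a where "a = \<alpha> * z0 - 1"
    define c where "c = z0 * (m0 - 1)"
    define e2 where "e2 = \<alpha>"
    define e1 where "e1 = \<alpha> * z0 + m0"
    define e0 where "e0 = m0 * z0"
    have az: "\<alpha> * z0 \<ge> 2 * sqrt (real CARD('d))"
      using mult_left_mono[OF z0, of \<alpha>] apos unfolding alpha by simp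
    have "sqrt (real CARD('d)) \<ge> 1" by simp
    hence a: "a \<ge> 0" using az unfolding a_def by linarith
    have c: "c \<ge> 0" using z0 m0ge1 unfolding c_def by simp
    have "z0 * (w \<bullet> (Zi *v w)) - w \<bullet> (N *v w) = e2 * a * g3 + (e2 * c + e1 * a) * g2 + (e1 * c + e0 * a) * g1 + e0 * c * g0"
      unfolding q1 q2 a_def c_def e0_def e1_def e2_def by (simp add: algebra_simps power2_eq_square)
    moreover have "e2 * a * g3 + (e2 * c + e1 * a) * g2 + (e1 * c + e0 * a) * g1 + e0 * c * g0 \<ge> 0"
      using a c apos z0 m0pos g0 g1 g2 g3 unfolding e0_def e1_def e2_def
      by (intro mult_nonneg_nonneg add_nonneg_nonneg) auto
    ultimately have "w \<bullet> (N *v w) \<le> z0 * (w \<bullet> (Zi *v w))" by linarith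
    thus ?thesis using apos by (simp add: mult_left_mono mult.assoc)
  qed
  show ?thesis unfolding frob_outer sqA lmin w_def[symmetric] Zi_def[symmetric]
    using ineq1 ineq2 by simp
qed

end
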